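(* Let $n\ge5$ and let $M=(m_1,\dots,m_t)$ be a list of integers with $2\le m_i\le n$ for all $i$ and $\sum M=n$. Then there is an $(M,n,n,n)$-decomposition of $2\langle\{1,2\}\rangle_n$.
   Context: Graphs may have multiple edges but no loops. For $m\ge2$, an $m$-cycle is a cycle with $m$ edges; a $2$-cycle consists of two parallel edges. For a graph $G$ and a positive integer $\lambda$, $\lambda G$ is the graph on $V(G)$ in which each pair of vertices is joined by $\lambda$ times as many edges as in $G$. For distinct $i,j\in\{0,\dots,n-1\}$, $d_n(i,j)$ is the distance between $i$ and $j$ in the cycle $(0,1,\dots,n-1)$. For $S\subseteq\{1,\dots,\lfloor n/2\rfloor\}$, the circulant $\langle S\rangle_n$ is the simple graph with vertex set $\{0,\dots,n-1\}$ and edge set $\{\{i,j\}:d_n(i,j)\in S\}$. A list is a finite multiset of integers, and $\sum M$ is the sum of its entries. For a list $M=(m_1,\dots,m_t)$, an $(M)$-decomposition of a graph all of whose degrees are even is a decomposition into cycles $G_1,\dots,G_t$ with $G_i$ an $m_i$-cycle. *)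

theory Defs
  imports Main "HOL-Library.Multiset"
begin

text \<open>Multigraphs are represented as multisets of edges; an edge is a 2-element
  set of vertices (so no loops). Vertices are natural numbers.\<close>

type_synonym mgraph = "nat set multiset"

definition is_mgraph :: "mgraph \<Rightarrow> bool" where
  "is_mgraph G \<longleftrightarrow> (\<forall>e \<in># G. card e = 2)"

definition cycle_edges :: "nat list \<Rightarrow> mgraph" where
  "cycle_edges vs = mset (map (\<lambda>i. {vs ! i, vs ! ((i + 1) mod length vs)}) [0..<length vs])"

text \<open>An m-cycle (m \<ge> 2); a 2-cycle is a pair of parallel edges.\<close>
definition is_cycle :: "nat \<Rightarrow> mgraph \<Rightarrow> bool" where
  "is_cycle m C \<longleftrightarrow> (\<exists>vs. 2 \<le> m \<and> length vs = m \<and> distinct vs \<and> C = cycle_edges vs)"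

definition has_cycle_decomp :: "nat list \<Rightarrow> mgraph \<Rightarrow> bool" where
  "has_cycle_decomp M G \<longleftrightarrow>
     (\<exists>Cs. length Cs = length M \<and> (\<forall>i < length M. is_cycle (M ! i) (Cs ! i))
           \<and> sum_list Cs = G)"

definition cdist :: "nat \<Rightarrow> nat \<Rightarrow> nat \<Rightarrow> nat" where
  "cdist n i j = min (if i \<le> j then j - i else i - j) (n - (if i \<le> j then j - i else i - j))"

definition circulant :: "nat set \<Rightarrow> nat \<Rightarrow> mgraph" where
  "circulant S n = mset_set {{i, j} | i j. i < n \<and> j < n \<and> i \<noteq> j \<and> cdist n i j \<in> S}"

definition mult_graph :: "nat \<Rightarrow> mgraph \<Rightarrow> mgraph" where
  "mult_graph k G = repeat_mset k G"

end

theory Submission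
  imports Defs
begin

fun pe :: "nat list \<Rightarrow> mgraph" where
  "pe (x # y # ys) = add_mset {x, y} (pe (y # ys))"
| "pe _ = {#}"

lemma pe_map: "pe xs = mset (map (\<lambda>i. {xs ! i, xs ! (i + 1)}) [0..<length xs - 1])"
proof (induction xs rule: pe.induct)
  case (1 x y ys)
  have "[0..<length (x # y # ys) - 1] = 0 # map Suc [0..<length (y # ys) - 1]"
    by (simp add: upt_conv_Cons map_Suc_upt del: upt_Suc)
  then show ?case using 1 by (simp add: comp_def)
qed auto

lemma ce_pe: "vs \<noteq> [] \<Longrightarrow> cycle_edges vs = pe (vs @ [hd vs])"
proof -
  assume ne: "vs \<noteq> []"
  let ?L = "length vs"
  have "pe (vs @ [hd vs]) = mset (map (\<lambda>i. {(vs @ [hd vs]) ! i, (vs @ [hd vs]) ! (i + 1)}) [0..<?L])"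
    by (simp add: pe_map)
  also have "map (\<lambda>i. {(vs @ [hd vs]) ! i, (vs @ [hd vs]) ! (i + 1)}) [0..<?L]
       = map (\<lambda>i. {vs ! i, vs ! ((i + 1) mod ?L)}) [0..<?L]"
  proof (rule map_cong[OF refl])
    fix i assume "i \<in> set [0..<?L]"
    then have i: "i < ?L" by simp
    show "{(vs @ [hd vs]) ! i, (vs @ [hd vs]) ! (i + 1)} = {vs ! i, vs ! ((i + 1) mod ?L)}"
    proof (cases "i + 1 < ?L")
      case True then show ?thesis using i by (simp add: nth_append)
    next
      case False
      then have "i + 1 = ?L" using i by simp
      then show ?thesis using i ne by (simp add: nth_append hd_conv_nth)
    qed
  qed
  finally show ?thesis by (simp add: cycle_edges_def)
qed

lemma pe_append: "xs \<noteq> [] \<Longrightarrow> ys \<noteq> [] \<Longrightarrow> pe (xs @ ys) = pe xs + add_mset {last xs, hd ys} (pe ys)"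
proof (induction xs)
  case Nil then show ?case by simp
next
  case (Cons x xs)
  show ?case
  proof (cases xs)
    case Nil then show ?thesis using Cons by (cases ys) auto
  next
    case (Cons y zs) then show ?thesis using Cons.IH Cons.prems by auto
  qed
qed

lemma pe_rev: "pe (rev xs) = pe xs"
proof (induction xs rule: pe.induct)
  case (1 x y ys)
  have "pe (rev (x # y # ys)) = pe (rev (y # ys) @ [x])" by simp
  also have "\<dots> = pe (rev (y # ys)) + {#{y, x}#}"
    by (subst pe_append) (auto simp: last_rev)
  finally show ?case using 1 by (simp add: insert_commute)
qed auto

lemma ce_rotate1: "cycle_edges (rotate1 vs) = cycle_edges vs"
proof (cases vs)
  case Nil then show ?thesis by simp
next
  case (Cons x xs)
  show ?thesis
  proof (cases xs)
    case Nil then show ?thesis using Cons by simp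
  next
    case (Cons y ys)
    have "cycle_edges (rotate1 vs) = pe (xs @ [x] @ [hd xs])"
      using \<open>vs = x # xs\<close> Cons by (simp add: ce_pe)
    also have "\<dots> = pe xs + add_mset {last xs, x} (pe [x, hd xs])"
      using Cons by (subst pe_append) auto
    also have "\<dots> = add_mset {x, hd xs} (pe xs + {#{last xs, x}#})" by simp
    also have "pe xs + {#{last xs, x}#} = pe (xs @ [x])"
      using Cons by (subst pe_append) auto
    also have "add_mset {x, hd xs} (pe (xs @ [x])) = pe (x # xs @ [x])"
      using Cons by simp
    also have "\<dots> = cycle_edges vs" using \<open>vs = x # xs\<close> by (simp add: ce_pe)
    finally show ?thesis .
  qed
qed

lemma ce_rotate: "cycle_edges (rotate k vs) = cycle_edges vs"
  by (induction k) (simp_all add: ce_rotate1)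

lemma ce_flip: "cycle_edges (x # rev xs) = cycle_edges (x # xs)"
proof -
  have "cycle_edges (x # rev xs) = pe (x # rev xs @ [x])" by (simp add: ce_pe)
  also have "\<dots> = pe (rev (x # xs @ [x]))" by simp
  also have "\<dots> = pe (x # xs @ [x])" by (rule pe_rev)
  also have "\<dots> = cycle_edges (x # xs)" by (simp add: ce_pe)
  finally show ?thesis .
qed

lemma ce_adj:
  assumes d: "distinct vs" and L: "3 \<le> length vs" and k: "k < length vs"
    and e: "{vs ! k, y} \<in># cycle_edges vs"
  shows "y = vs ! ((k + 1) mod length vs) \<or> y = vs ! ((k + length vs - 1) mod length vs)"
proof -
  let ?L = "length vs"
  from e obtain i where i: "i < ?L" and eq: "{vs ! k, y} = {vs ! i, vs ! ((i + 1) mod ?L)}"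
    by (auto simp: cycle_edges_def)
  have m: "(i + 1) mod ?L < ?L" by (rule mod_less_divisor) (use L in auto)
  from eq have "(vs ! k = vs ! i \<and> y = vs ! ((i + 1) mod ?L)) \<or> (vs ! k = vs ! ((i + 1) mod ?L) \<and> y = vs ! i)"
    by (auto simp: doubleton_eq_iff)
  then show ?thesis
  proof
    assume h: "vs ! k = vs ! i \<and> y = vs ! ((i + 1) mod ?L)"
    then have "k = i" using d k i by (simp add: nth_eq_iff_index_eq)
    then show ?thesis using h by simp
  next
    assume h: "vs ! k = vs ! ((i + 1) mod ?L) \<and> y = vs ! i"
    then have ki: "k = (i + 1) mod ?L" using d k m by (simp add: nth_eq_iff_index_eq)
    have "i = (k + ?L - 1) mod ?L"
    proof (cases "i + 1 < ?L")
      case True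
      then have "k = i + 1" using ki by simp
      then show ?thesis using i by simp
    next
      case False
      then have "i + 1 = ?L" using i by simp
      then have "k = 0" using ki by simp
      then show ?thesis using \<open>i + 1 = ?L\<close> by simp
    qed
    then show ?thesis using h by simp
  qed
qed

lemma ce_sub: "e \<in># cycle_edges vs \<Longrightarrow> e \<subseteq> set vs"
proof -
  assume "e \<in># cycle_edges vs"
  then obtain i where i: "i < length vs" and e: "e = {vs ! i, vs ! ((i + 1) mod length vs)}"
    by (auto simp: cycle_edges_def)
  have "(i + 1) mod length vs < length vs" using i by (intro mod_less_divisor) auto
  then show ?thesis using e i by auto
qed

lemma pe_vertex: "2 \<le> length p \<Longrightarrow> v \<in> set p \<Longrightarrow> \<exists>e. e \<in># pe p \<and> v \<in> e"
proof (induction p rule: pe.induct)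
  case (1 x y ys)
  show ?case
  proof (cases "v = x \<or> v = y")
    case True then show ?thesis by auto
  next
    case False
    then have "v \<in> set ys" using 1(3) by auto
    then have "2 \<le> length (y # ys)" by (cases ys) auto
    with 1(1) \<open>v \<in> set ys\<close> show ?thesis by auto
  qed
qed auto

lemma path_in_cycle:
  assumes d: "distinct vs" and L: "3 \<le> length vs"
  shows "distinct p \<Longrightarrow> p \<noteq> [] \<Longrightarrow> hd p \<in> set vs \<Longrightarrow> set_mset (pe p) \<subseteq> set_mset (cycle_edges vs) \<Longrightarrow>
    \<exists>ws. distinct ws \<and> length ws = length vs \<and> set ws = set vs \<and> cycle_edges ws = cycle_edges vs \<and> take (length p) ws = p"
proof (induction p rule: rev_induct)
  case Nil then show ?case by simp
next
  case (snoc y q)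
  show ?case
  proof (cases "q = []")
    case True
    then have y: "y \<in> set vs" using snoc.prems by simp
    obtain j where j: "j < length vs" "vs ! j = y" using y by (auto simp: in_set_conv_nth)
    let ?ws = "rotate j vs"
    have "?ws ! 0 = y" using j L
      by (subst nth_rotate) auto
    moreover have "?ws \<noteq> []" using L by auto
    ultimately have "take 1 ?ws = [y]" by (cases ?ws) auto
    then show ?thesis using True d by (intro exI[of _ ?ws]) (auto simp: ce_rotate)
  next
    case False
    have pe_split: "pe (q @ [y]) = pe q + {#{last q, y}#}"
      using False by (subst pe_append) auto
    have "\<exists>ws. distinct ws \<and> length ws = length vs \<and> set ws = set vs \<and> cycle_edges ws = cycle_edges vs \<and> take (length q) ws = q"
      using snoc.prems False pe_split by (intro snoc.IH) auto
    then obtain ws where ws: "distinct ws" "length ws = length vs" "set ws = set vs"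
      "cycle_edges ws = cycle_edges vs" "take (length q) ws = q" by blast
    let ?L = "length vs"
    let ?k = "length q - 1"
    have "length (take (length q) ws) = length q" using ws(5) by simp
    then have lq: "length q \<le> ?L" using ws(2) by (simp add: min_def split: if_splits)
    have qpos: "0 < length q" using False by simp
    have k: "?k < ?L" using lq qpos by linarith
    have wk: "ws ! ?k = last q"
      using ws(5) qpos by (metis diff_less last_conv_nth length_greater_0_conv less_one nth_take)
    have qi: "\<And>i. i < length q \<Longrightarrow> ws ! i = q ! i" using ws(5) by (metis nth_take)
    have yq: "y \<notin> set q" using snoc.prems by simp
    have "{last q, y} \<in># cycle_edges ws" using snoc.prems(4) pe_split ws(4) by auto
    then have adj: "y = ws ! ((?k + 1) mod ?L) \<or> y = ws ! ((?k + ?L - 1) mod ?L)"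
      using ce_adj[OF ws(1) _ , of ?k y] ws(2) L k wk by simp
    have cases: "(?k + 1 < ?L \<and> y = ws ! (?k + 1)) \<or> (?k = 0 \<and> y = ws ! (?L - 1))"
    proof (cases "?k + 1 < ?L")
      case True
      show ?thesis
      proof (cases "?k = 0")
        case True
        then show ?thesis using adj \<open>?k + 1 < ?L\<close> by auto
      next
        case False
        then have e1: "?k + ?L - 1 = (?k - 1) + ?L" by linarith
        have "(?k + ?L - 1) mod ?L = ?k - 1" unfolding e1 using k by simp
        moreover have "ws ! (?k - 1) \<in> set q" using qi[of "?k - 1"] qpos False by simp
        ultimately show ?thesis using adj yq True by auto
      qed
    next
      case False
      then have "?k + 1 = ?L" using k by simp
      then have "(?k + 1) mod ?L = 0" by simp
      moreover have "ws ! 0 \<in> set q" using qi[of 0] qpos by simp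
      ultimately have "y = ws ! ((?k + ?L - 1) mod ?L)" using adj yq by auto
      moreover have "?k \<noteq> 0" using \<open>?k + 1 = ?L\<close> L by simp
      moreover have "(?k + ?L - 1) mod ?L = ?k - 1"
      proof -
        have e1: "?k + ?L - 1 = (?k - 1) + ?L" using \<open>?k \<noteq> 0\<close> by linarith
        show ?thesis unfolding e1 using k by simp
      qed
      moreover have "ws ! (?k - 1) \<in> set q" using qi[of "?k - 1"] qpos by simp
      ultimately show ?thesis using yq by auto
    qed
    then show ?thesis
    proof
      assume h: "?k + 1 < ?L \<and> y = ws ! (?k + 1)"
      have "?k + 1 = length q" using qpos by simp
      then have "take (length (q @ [y])) ws = take (length q) ws @ [ws ! length q]"
        using h ws(2) by (simp add: take_Suc_conv_app_nth)
      then show ?thesis using ws h \<open>?k + 1 = length q\<close> by auto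
    next
      assume h: "?k = 0 \<and> y = ws ! (?L - 1)"
      then have q1: "length q = 1" using qpos by linarith
      obtain x xs where wsx: "ws = x # xs" using ws(2) L by (cases ws) auto
      have xsne: "xs \<noteq> []" using wsx ws(2) L by auto
      let ?ws' = "x # rev xs"
      have "q = [x]" using q1 ws(5) wsx by (cases q) auto
      moreover have "y = last xs"
      proof -
        have "length vs - 1 = length xs" using wsx ws(2) by simp
        then have "y = (x # xs) ! length xs" using h wsx by simp
        then show ?thesis using xsne by (simp add: last_conv_nth nth_Cons')
      qed
      ultimately have "take (length (q @ [y])) ?ws' = q @ [y]"
        using xsne by (cases "rev xs") auto
      moreover have "cycle_edges ?ws' = cycle_edges vs" using ws(4) wsx by (simp add: ce_flip)
      ultimately show ?thesis using ws wsx by (intro exI[of _ ?ws']) auto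
    qed
  qed
qed

lemma replace_path:
  assumes d: "distinct vs" and L: "3 \<le> length vs"
    and dp: "distinct (u # P @ [w])" and pin: "set_mset (pe (u # P @ [w])) \<subseteq> set_mset (cycle_edges vs)"
    and dq: "distinct (u # Q @ [w])" and fresh: "set Q \<inter> set vs \<subseteq> set P"
  shows "\<exists>ws. distinct ws \<and> length ws + length P = length vs + length Q \<and>
     set ws = (set vs - set P) \<union> set Q \<and>
     cycle_edges ws + pe (u # P @ [w]) = cycle_edges vs + pe (u # Q @ [w])"
proof -
  let ?p = "u # P @ [w]"
  let ?q = "u # Q @ [w]"
  have "{u, hd (P @ [w])} \<in># pe ?p" by (cases "P @ [w]") auto
  then have "{u, hd (P @ [w])} \<subseteq> set vs" using pin ce_sub by blast
  then have u: "u \<in> set vs" by simp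
  obtain ws0 where ws0: "distinct ws0" "length ws0 = length vs" "set ws0 = set vs"
      "cycle_edges ws0 = cycle_edges vs" "take (length ?p) ws0 = ?p"
    using path_in_cycle[OF d L, of ?p] dp pin u by auto
  define R where "R = drop (length ?p) ws0"
  have ws0R: "ws0 = ?p @ R" using ws0(5) R_def by (metis append_take_drop_id)
  have dR: "distinct R" and pR: "set ?p \<inter> set R = {}" using ws0(1) ws0R by auto
  have setvs: "set vs = set ?p \<union> set R" using ws0(3) ws0R by auto
  let ?ws = "?q @ R"
  have ce_old: "cycle_edges ws0 = pe ?p + add_mset {w, hd (R @ [u])} (pe (R @ [u]))"
    using ws0R by (simp add: ce_pe pe_append[of ?p "R @ [u]", simplified])
  have ce_new: "cycle_edges ?ws = pe ?q + add_mset {w, hd (R @ [u])} (pe (R @ [u]))"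
    by (simp add: ce_pe pe_append[of ?q "R @ [u]", simplified])
  have "set Q \<inter> set R = {}" using fresh setvs pR by auto
  then have "distinct ?ws" using dq dR pR by auto
  moreover have "length ?ws + length P = length vs + length Q" using ws0(2) ws0R by simp
  moreover have "set ?ws = (set vs - set P) \<union> set Q"
    using setvs pR dp by auto
  moreover have "cycle_edges ?ws + pe ?p = cycle_edges vs + pe ?q"
    using ce_old ce_new ws0(4) by (simp add: add.commute add.left_commute)
  ultimately show ?thesis by blast
qed

definition sh :: "nat \<Rightarrow> nat set" where "sh i = {i, Suc i}"
definition lo :: "nat \<Rightarrow> nat set" where "lo i = {i, i + 2}"

definition B1 :: "nat \<Rightarrow> mgraph" where
  "B1 n = image_mset sh (mset_set {..<n - 1}) + image_mset lo (mset_set {..<n - 2})"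
definition W1 :: "nat \<Rightarrow> mgraph" where
  "W1 n = {#{n - 1, 0}, {n - 2, 0}, {n - 1, 1}#}"
definition En :: "nat \<Rightarrow> mgraph" where
  "En n = B1 n + B1 n + W1 n + W1 n"

lemma B1_Suc: "2 \<le> k \<Longrightarrow> B1 (Suc k) = B1 k + {#{k - 1, k}, {k - 2, k}#}"
proof -
  assume k: "2 \<le> k"
  have a: "{..<Suc k - 1} = insert (k - 1) {..<k - 1}" using k by auto
  have b: "{..<Suc k - 2} = insert (k - 2) {..<k - 2}" using k by auto
  have "sh (k - 1) = {k - 1, k}" using k by (simp add: sh_def)
  moreover have "lo (k - 2) = {k - 2, k}" using k unfolding lo_def by (metis le_add_diff_inverse2)
  ultimately show ?thesis unfolding B1_def a b by simp
qed

lemma circ_set: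
  assumes n: "5 \<le> n"
  shows "{{i, j} | i j. i < n \<and> j < n \<and> i \<noteq> j \<and> cdist n i j \<in> {1, 2}}
       = sh ` {..<n - 1} \<union> lo ` {..<n - 2} \<union> {{n - 1, 0}, {n - 2, 0}, {n - 1, 1}}"
    (is "?S = ?R")
proof
  show "?S \<subseteq> ?R"
  proof
    fix e assume "e \<in> ?S"
    then obtain i j where e: "e = {i, j}" and ij: "i < n" "j < n" "i \<noteq> j" and c: "cdist n i j \<in> {1, 2}"
      by blast
    have key: "\<And>a b. a < b \<Longrightarrow> b < n \<Longrightarrow> min (b - a) (n - (b - a)) \<in> {1, 2} \<Longrightarrow> {a, b} \<in> ?R"
    proof -
      fix a b assume ab: "a < b" "b < n" "min (b - a) (n - (b - a)) \<in> {1, 2}"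
      have h: "b - a = 1 \<or> b - a = 2 \<or> n - (b - a) = 1 \<or> n - (b - a) = 2"
        using ab(3) by (auto simp: min_def split: if_splits)
      have "b = a + 1 \<or> b = a + 2 \<or> (a = 0 \<and> b = n - 1) \<or> (a = 0 \<and> b = n - 2) \<or> (a = 1 \<and> b = n - 1)"
        using h ab(1,2) by (elim disjE) presburger+
      then consider "b = a + 1" | "b = a + 2" | "a = 0 \<and> b = n - 1" | "a = 0 \<and> b = n - 2" | "a = 1 \<and> b = n - 1"
        by blast
      then show "{a, b} \<in> ?R"
      proof cases
        case 1
        then have "{a, b} = sh a" by (simp add: sh_def)
        moreover have "a < n - 1" using 1 ab by simp
        ultimately show ?thesis by blast
      next
        case 2
        then have "{a, b} = lo a" by (simp add: lo_def)
        moreover have "a < n - 2" using 2 ab by simp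
        ultimately show ?thesis by blast
      qed (auto simp: insert_commute)
    qed
    show "e \<in> ?R"
    proof (cases "i < j")
      case True
      then show ?thesis using key[of i j] ij c e by (simp add: cdist_def)
    next
      case False
      then have "j < i" using ij by simp
      then show ?thesis using key[of j i] ij c e by (simp add: cdist_def insert_commute)
    qed
  qed
next
  show "?R \<subseteq> ?S"
  proof
    have mem: "\<And>i j. i < n \<Longrightarrow> j < n \<Longrightarrow> i \<noteq> j \<Longrightarrow> cdist n i j \<in> {1, 2} \<Longrightarrow> {i, j} \<in> ?S"
      by blast
    fix e assume "e \<in> ?R"
    then consider (a) i where "i < n - 1" "e = sh i" | (b) i where "i < n - 2" "e = lo i"
      | (c) "e = {n - 1, 0}" | (d) "e = {n - 2, 0}" | (e) "e = {n - 1, 1}" by blast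
    then show "e \<in> ?S"
    proof cases
      case (a i)
      have "cdist n i (Suc i) = 1" using n a by (simp add: cdist_def)
      then show ?thesis using mem[of i "Suc i"] a by (simp add: sh_def)
    next
      case (b i)
      have "cdist n i (i + 2) = 2" using n b by (simp add: cdist_def)
      then show ?thesis using mem[of i "i + 2"] b by (simp add: lo_def)
    next
      case c
      have "cdist n (n - 1) 0 = 1" using n by (simp add: cdist_def)
      then show ?thesis using mem[of "n - 1" 0] c n by simp
    next
      case d
      have "cdist n (n - 2) 0 = 2" using n by (simp add: cdist_def)
      then show ?thesis using mem[of "n - 2" 0] d n by simp
    next
      case e
      have "cdist n (n - 1) 1 = 2" using n by (simp add: cdist_def)
      then show ?thesis using mem[of "n - 1" 1] e n by simp
    qed
  qed
qed

lemma circ_En: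
  assumes n: "5 \<le> n"
  shows "mult_graph 2 (circulant {1, 2} n) = En n"
proof -
  have inj1: "inj_on sh {..<n - 1}" by (auto simp: inj_on_def sh_def doubleton_eq_iff)
  have inj2: "inj_on lo {..<n - 2}" by (auto simp: inj_on_def lo_def doubleton_eq_iff)
  have disj1: "sh ` {..<n - 1} \<inter> lo ` {..<n - 2} = {}"
    by (auto simp: sh_def lo_def doubleton_eq_iff)
  have disj2: "(sh ` {..<n - 1} \<union> lo ` {..<n - 2}) \<inter> {{n - 1, 0}, {n - 2, 0}, {n - 1, 1}} = {}"
    using n by (auto simp: sh_def lo_def doubleton_eq_iff)
  have m3: "mset_set {{n - 1, 0}, {n - 2, 0}, {n - 1, 1}} = W1 n"
    using n by (auto simp: W1_def doubleton_eq_iff)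
  have f: "finite (sh ` {..<n - 1} \<union> lo ` {..<n - 2})" by simp
  have c1: "circulant {1, 2} n = mset_set (sh ` {..<n - 1} \<union> lo ` {..<n - 2}) + mset_set {{n - 1, 0}, {n - 2, 0}, {n - 1, 1}}"
    unfolding circulant_def circ_set[OF n] by (rule mset_set_Union[OF f _ disj2]) simp
  have c2: "mset_set (sh ` {..<n - 1} \<union> lo ` {..<n - 2}) = mset_set (sh ` {..<n - 1}) + mset_set (lo ` {..<n - 2})"
    by (rule mset_set_Union[OF _ _ disj1]) simp_all
  have "circulant {1, 2} n = image_mset sh (mset_set {..<n - 1}) + image_mset lo (mset_set {..<n - 2}) + W1 n"
    unfolding c1 c2 m3 image_mset_mset_set[OF inj1] image_mset_mset_set[OF inj2] ..
  then show ?thesis by (simp add: mult_graph_def En_def B1_def numeral_2_eq_2 add_ac)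
qed

definition ham :: "nat \<Rightarrow> mgraph \<Rightarrow> bool" where
  "ham n H \<longleftrightarrow> (\<exists>vs. distinct vs \<and> set vs = {..<n} \<and> H = cycle_edges vs)"

definition cyc_list :: "nat list \<Rightarrow> mgraph list \<Rightarrow> bool" where
  "cyc_list Ms Fs \<longleftrightarrow> length Ms = length Fs \<and> (\<forall>i<length Ms. is_cycle (Ms ! i) (Fs ! i))"

definition Pst :: "nat \<Rightarrow> nat list \<Rightarrow> mgraph list \<Rightarrow> nat \<Rightarrow> mgraph \<Rightarrow> mgraph \<Rightarrow> mgraph \<Rightarrow> mgraph \<Rightarrow> bool" where
  "Pst n Ms Fs m C a b c \<longleftrightarrow> 5 \<le> n \<and> cyc_list Ms Fs \<and>
     (\<exists>vs. distinct vs \<and> length vs = m \<and> 3 \<le> m \<and> set vs \<subseteq> {..<n} \<and> C = cycle_edges vs) \<and>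
     ham n a \<and> ham n b \<and> ham n c \<and> sum_list Fs + C + a + b + c = En n \<and>
     {n - 2, 0} \<in># C \<and> {n - 1, 0} \<in># C \<and>
     {n - 2, 0} \<in># a \<and> {n - 1, 0} \<in># a \<and> {1, 2} \<in># a \<and>
     {n - 1, 1} \<in># b \<and> {0, 1} \<in># b \<and> {0, 2} \<in># b \<and> {n - 2, n - 1} \<in># b \<and>
     {n - 1, 1} \<in># c \<and> {0, 1} \<in># c \<and> {0, 2} \<in># c"

definition Qst :: "nat \<Rightarrow> nat list \<Rightarrow> mgraph list \<Rightarrow> mgraph \<Rightarrow> mgraph \<Rightarrow> mgraph \<Rightarrow> bool" where
  "Qst n Ms Fs x y z \<longleftrightarrow> 5 \<le> n \<and> cyc_list Ms Fs \<and>
     ham n x \<and> ham n y \<and> ham n z \<and> sum_list Fs + cycle_edges [n - 1, 0] + x + y + z = En n \<and>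
     {n - 2, 0} \<in># x \<and> {n - 1, 1} \<in># x \<and> {0, 2} \<in># x \<and>
     {n - 2, 0} \<in># y \<and> {0, 1} \<in># y \<and> {1, 2} \<in># y \<and>
     {n - 1, 1} \<in># z \<and> {0, 1} \<in># z \<and> {0, 2} \<in># z"

lemma in_new: "(A' :: mgraph) + X = A + Y \<Longrightarrow> e \<in># A + Y \<Longrightarrow> e \<notin># X \<Longrightarrow> e \<in># A'"
  by (metis union_iff)

lemma comb:
  fixes a1 :: mgraph
  assumes h1: "a1 + X = a + Y" and h2: "a2 + X' = a1 + Y'"
  shows "a2 + (X + X') = a + (Y + Y')"
proof -
  have "a2 + (X + X') = (a2 + X') + X" by (simp add: add_ac)
  also have "\<dots> = (a1 + X) + Y'" using h2 by (simp add: add_ac)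
  also have "\<dots> = a + (Y + Y')" using h1 by (simp add: add_ac)
  finally show ?thesis .
qed

lemma msum4:
  fixes S :: mgraph
  assumes "S + C + a + b + c = E" "C2 + X1 = C + Y1" "a2 + X2 = a + Y2" "b2 + X3 = b + Y3" "c2 + X4 = c + Y4"
  shows "S + C2 + a2 + b2 + c2 + (X1 + X2 + X3 + X4) = E + (Y1 + Y2 + Y3 + Y4)"
proof -
  have "S + C2 + a2 + b2 + c2 + (X1 + X2 + X3 + X4) = S + (C2 + X1) + (a2 + X2) + (b2 + X3) + (c2 + X4)"
    by (simp add: ac_simps)
  also have "\<dots> = S + (C + Y1) + (a + Y2) + (b + Y3) + (c + Y4)" using assms by simp
  also have "\<dots> = (S + C + a + b + c) + (Y1 + Y2 + Y3 + Y4)" by (simp add: ac_simps)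
  finally show ?thesis using assms(1) by simp
qed

lemma ce2: "cycle_edges [x, y] = {#{x, y}, {y, x}#}" by (simp add: ce_pe)
lemma ce3: "cycle_edges [x, y, z] = {#{x, y}, {y, z}, {z, x}#}" by (simp add: ce_pe)

lemma repl:
  assumes "distinct vs" "3 \<le> length vs" "H = cycle_edges vs"
    "distinct (u # P @ [w])" "set_mset (pe (u # P @ [w])) \<subseteq> set_mset H"
    "distinct (u # Q @ [w])" "set Q \<inter> set vs \<subseteq> set P"
  obtains ws where "distinct ws" "length ws + length P = length vs + length Q"
     "set ws = (set vs - set P) \<union> set Q"
     "cycle_edges ws + pe (u # P @ [w]) = H + pe (u # Q @ [w])"
  using replace_path[OF assms(1,2,4) _ assms(6,7)] assms(3,5) by blast

lemma subdiv:
  assumes "distinct vs" "3 \<le> length vs" "H = cycle_edges vs" "u \<noteq> w" "{u, w} \<in># H" "x \<notin> set vs"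
  obtains ws where "distinct ws" "length ws = Suc (length vs)" "set ws = insert x (set vs)"
    "cycle_edges ws + {#{u, w}#} = H + {#{u, x}, {x, w}#}"
proof -
  have "{u, w} \<subseteq> set vs" using assms(3,5) ce_sub by blast
  then have ux: "u \<noteq> x" "w \<noteq> x" using assms(6) by auto
  have d1: "distinct (u # [] @ [w])" using assms(4) by simp
  have d2: "distinct (u # [x] @ [w])" using assms(4) ux by simp
  have s1: "set_mset (pe (u # [] @ [w])) \<subseteq> set_mset H" using assms(5) by simp
  have fr: "set [x] \<inter> set vs \<subseteq> set []" using assms(6) by simp
  obtain ws where ws: "distinct ws" "length ws + length ([] :: nat list) = length vs + length [x]"
     "set ws = (set vs - set []) \<union> set [x]"
     "cycle_edges ws + pe (u # [] @ [w]) = H + pe (u # [x] @ [w])"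
    by (rule repl[OF assms(1,2,3) d1 s1 d2 fr])
  show ?thesis by (rule that) (use ws in simp_all)
qed

lemma replV:
  assumes "distinct vs" "set vs = V" "3 \<le> card V" "H = cycle_edges vs"
    "distinct (u # P @ [w])" "set_mset (pe (u # P @ [w])) \<subseteq> set_mset H"
    "distinct (u # Q @ [w])" "set Q \<inter> V \<subseteq> set P"
  obtains ws where "distinct ws" "set ws = (V - set P) \<union> set Q"
     "cycle_edges ws + pe (u # P @ [w]) = H + pe (u # Q @ [w])"
proof -
  have l3: "3 \<le> length vs" using assms(1,2,3) distinct_card by metis
  have fr: "set Q \<inter> set vs \<subseteq> set P" using assms(2,8) by simp
  obtain ws where ws: "distinct ws" "length ws + length P = length vs + length Q"
     "set ws = (set vs - set P) \<union> set Q" "cycle_edges ws + pe (u # P @ [w]) = H + pe (u # Q @ [w])"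
    by (rule repl[OF assms(1) l3 assms(4,5,6,7) fr])
  show ?thesis by (rule that[OF ws(1) _ ws(4)]) (use ws(3) assms(2) in simp)
qed

lemma B1_2: "2 \<le> n \<Longrightarrow> B1 (n + 2) = B1 n + {#{n - 1, n}, {n - 2, n}, {n, n + 1}, {n - 1, n + 1}#}"
  using B1_Suc[of n] B1_Suc[of "Suc n"] by (simp add: add_mset_commute)

lemma B1_3: "2 \<le> n \<Longrightarrow> B1 (n + 3) = B1 n + {#{n - 1, n}, {n - 2, n}, {n, n + 1}, {n - 1, n + 1}, {n + 1, n + 2}, {n, n + 2}#}"
proof -
  assume n: "2 \<le> n"
  have e: "n + 3 = Suc (n + 2)" by simp
  show ?thesis unfolding e using B1_2[OF n] B1_Suc[of "n + 2"] n by (simp add: add_mset_commute)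
qed

lemma B1_SS: "2 \<le> n \<Longrightarrow> B1 (Suc (Suc n)) = B1 n + {#{n - 1, n}, {n - 2, n}, {n, n + 1}, {n - 1, n + 1}#}"
  using B1_2[of n] by simp

lemma add_rc: "(x :: mgraph) + y + z = x + z + y" by (simp add: add_ac)

lemma in_cnt:
  assumes "(A' :: mgraph) + X = A + Y" "(e \<in># A \<and> count X e \<le> count Y e) \<or> count X e < count Y e"
  shows "e \<in># A'"
proof -
  have "count (A' + X) e = count (A + Y) e" using assms(1) by simp
  then have "count A' e + count X e = count A e + count Y e" by simp
  moreover have "count X e < count A e + count Y e"
  proof (cases "e \<in># A \<and> count X e \<le> count Y e")
    case True
    then have "0 < count A e" by simp
    then show ?thesis using True by linarith
  next
    case False
    then show ?thesis using assms(2) by linarith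
  qed
  ultimately have "0 < count A' e" by linarith
  then show ?thesis by simp
qed

lemma Qst_intro:
  assumes "5 \<le> n" "cyc_list Ms Fs" "ham n x" "ham n y" "ham n z"
    "sum_list Fs + cycle_edges [n - 1, 0] + x + y + z = En n"
    "{n - 2, 0} \<in># x" "{n - 1, 1} \<in># x" "{0, 2} \<in># x"
    "{n - 2, 0} \<in># y" "{0, 1} \<in># y" "{1, 2} \<in># y"
    "{n - 1, 1} \<in># z" "{0, 1} \<in># z" "{0, 2} \<in># z"
  shows "Qst n Ms Fs x y z"
  using assms unfolding Qst_def by blast

lemma QstE:
  assumes "Qst n Ms Fs x y z"
  obtains vx vy vz where "5 \<le> n" "cyc_list Ms Fs" "sum_list Fs + cycle_edges [n - 1, 0] + x + y + z = En n"
    "distinct vx" "set vx = {..<n}" "x = cycle_edges vx"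
    "distinct vy" "set vy = {..<n}" "y = cycle_edges vy"
    "distinct vz" "set vz = {..<n}" "z = cycle_edges vz"
    "{n - 2, 0} \<in># x" "{n - 1, 1} \<in># x" "{0, 2} \<in># x"
    "{n - 2, 0} \<in># y" "{0, 1} \<in># y" "{1, 2} \<in># y"
    "{n - 1, 1} \<in># z" "{0, 1} \<in># z" "{0, 2} \<in># z"
  using assms unfolding Qst_def ham_def by blast

lemma cyc_list_snoc: "cyc_list Ms Fs \<Longrightarrow> is_cycle m F \<Longrightarrow> cyc_list (Ms @ [m]) (Fs @ [F])"
  unfolding cyc_list_def by (auto simp: nth_append)

lemma ham_intro: "distinct ws \<Longrightarrow> set ws = {..<n} \<Longrightarrow> ham n (cycle_edges ws)"
  unfolding ham_def by blast

lemma lt2: "{..<(n::nat) + 2} = {..<n} \<union> {n, n + 1}" by auto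
lemma lt3: "{..<(n::nat) + 3} = {..<n} \<union> {n, n + 1, n + 2}" by auto

lemma grow:
  assumes "Pst n Ms Fs m C a b c"
  shows "\<exists>C' a' b' c'. Pst (Suc n) Ms Fs (Suc m) C' a' b' c'"
proof -
  from assms have n: "5 \<le> n" and cl: "cyc_list Ms Fs" and sum: "sum_list Fs + C + a + b + c = En n"
    and f: "{n - 2, 0} \<in># C" "{n - 1, 0} \<in># C"
      "{n - 2, 0} \<in># a" "{n - 1, 0} \<in># a" "{1, 2} \<in># a"
      "{n - 1, 1} \<in># b" "{0, 1} \<in># b" "{0, 2} \<in># b" "{n - 2, n - 1} \<in># b"
      "{n - 1, 1} \<in># c" "{0, 1} \<in># c" "{0, 2} \<in># c"
    unfolding Pst_def by auto
  from assms obtain vC where vC: "distinct vC" "length vC = m" "3 \<le> m" "set vC \<subseteq> {..<n}" "C = cycle_edges vC"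
    unfolding Pst_def by auto
  from assms obtain va vb vc where va: "distinct va" "set va = {..<n}" "a = cycle_edges va"
    and vb: "distinct vb" "set vb = {..<n}" "b = cycle_edges vb"
    and vc: "distinct vc" "set vc = {..<n}" "c = cycle_edges vc"
    unfolding Pst_def ham_def by auto
  have la: "length va = n" using va distinct_card by fastforce
  have lb: "length vb = n" using vb distinct_card by fastforce
  have lc: "length vc = n" using vc distinct_card by fastforce
  have ne1: "n - 2 \<noteq> 0" "n - 1 \<noteq> 1" using n by auto
  have nC: "n \<notin> set vC" using vC(4) by auto
  have nn: "n \<notin> set va" "n \<notin> set vb" "n \<notin> set vc" using va(2) vb(2) vc(2) by auto
  obtain wC where wC: "distinct wC" "length wC = Suc (length vC)" "set wC = insert n (set vC)"
      "cycle_edges wC + {#{n - 2, 0}#} = C + {#{n - 2, n}, {n, 0}#}"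
    by (rule subdiv[OF vC(1) _ vC(5) ne1(1) f(1) nC]) (use vC(2,3) in simp)
  obtain wa where wa: "distinct wa" "length wa = Suc (length va)" "set wa = insert n (set va)"
      "cycle_edges wa + {#{n - 2, 0}#} = a + {#{n - 2, n}, {n, 0}#}"
    by (rule subdiv[OF va(1) _ va(3) ne1(1) f(3) nn(1)]) (use la n in simp)
  obtain wb where wb: "distinct wb" "length wb = Suc (length vb)" "set wb = insert n (set vb)"
      "cycle_edges wb + {#{n - 1, 1}#} = b + {#{n - 1, n}, {n, 1}#}"
    by (rule subdiv[OF vb(1) _ vb(3) ne1(2) f(6) nn(2)]) (use lb n in simp)
  obtain wc where wc: "distinct wc" "length wc = Suc (length vc)" "set wc = insert n (set vc)"
      "cycle_edges wc + {#{n - 1, 1}#} = c + {#{n - 1, n}, {n, 1}#}"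
    by (rule subdiv[OF vc(1) _ vc(3) ne1(2) f(10) nn(3)]) (use lc n in simp)
  have S: "sum_list Fs + cycle_edges wC + cycle_edges wa + cycle_edges wb + cycle_edges wc
     + ({#{n - 2, 0}#} + {#{n - 2, 0}#} + {#{n - 1, 1}#} + {#{n - 1, 1}#})
     = En n + ({#{n - 2, n}, {n, 0}#} + {#{n - 2, n}, {n, 0}#} + {#{n - 1, n}, {n, 1}#} + {#{n - 1, n}, {n, 1}#})"
    by (rule msum4[OF sum wC(4) wa(4) wb(4) wc(4)])
  have E: "En (Suc n) + ({#{n - 2, 0}#} + {#{n - 2, 0}#} + {#{n - 1, 1}#} + {#{n - 1, 1}#})
     = En n + ({#{n - 2, n}, {n, 0}#} + {#{n - 2, n}, {n, 0}#} + {#{n - 1, n}, {n, 1}#} + {#{n - 1, n}, {n, 1}#})"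
    using n by (simp add: En_def B1_Suc W1_def)
  have "sum_list Fs + cycle_edges wC + cycle_edges wa + cycle_edges wb + cycle_edges wc
     + ({#{n - 2, 0}#} + {#{n - 2, 0}#} + {#{n - 1, 1}#} + {#{n - 1, 1}#})
     = En (Suc n) + ({#{n - 2, 0}#} + {#{n - 2, 0}#} + {#{n - 1, 1}#} + {#{n - 1, 1}#})"
    using S E by (simp only:)
  then have sum': "sum_list Fs + cycle_edges wC + cycle_edges wa + cycle_edges wb + cycle_edges wc = En (Suc n)"
    by (rule add_right_imp_eq)
  have g2: "\<exists>vs. distinct vs \<and> length vs = Suc m \<and> 3 \<le> Suc m \<and> set vs \<subseteq> {..<Suc n} \<and> cycle_edges wC = cycle_edges vs"
    using wC vC by (intro exI[of _ wC]) auto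
  have g3: "ham (Suc n) (cycle_edges wa)" "ham (Suc n) (cycle_edges wb)" "ham (Suc n) (cycle_edges wc)"
    unfolding ham_def using wa va wb vb wc vc by (auto simp: lessThan_Suc)
  have g4: "{Suc n - 2, 0} \<in># cycle_edges wC" "{Suc n - 1, 0} \<in># cycle_edges wC"
    "{Suc n - 2, 0} \<in># cycle_edges wa" "{Suc n - 1, 0} \<in># cycle_edges wa" "{1, 2} \<in># cycle_edges wa"
    by (rule in_new[OF wC(4)] in_new[OF wa(4)]; use f n in \<open>auto simp: doubleton_eq_iff\<close>)+
  have g5: "{Suc n - 1, 1} \<in># cycle_edges wb" "{0, 1} \<in># cycle_edges wb" "{0, 2} \<in># cycle_edges wb"
    "{Suc n - 2, Suc n - 1} \<in># cycle_edges wb"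
    "{Suc n - 1, 1} \<in># cycle_edges wc" "{0, 1} \<in># cycle_edges wc" "{0, 2} \<in># cycle_edges wc"
    by (rule in_new[OF wb(4)] in_new[OF wc(4)]; use f n in \<open>auto simp: doubleton_eq_iff\<close>)+
  have n': "5 \<le> Suc n" using n by simp
  show ?thesis
    apply (rule exI[of _ "cycle_edges wC"], rule exI[of _ "cycle_edges wa"], rule exI[of _ "cycle_edges wb"],
        rule exI[of _ "cycle_edges wc"])
    unfolding Pst_def using n' cl g2 g3 g4 g5 sum' by blast
qed

lemma PstE:
  assumes "Pst n Ms Fs m C a b c"
  obtains vC va vb vc where "5 \<le> n" "cyc_list Ms Fs" "sum_list Fs + C + a + b + c = En n"
    "distinct vC" "length vC = m" "3 \<le> m" "set vC \<subseteq> {..<n}" "C = cycle_edges vC"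
    "distinct va" "set va = {..<n}" "a = cycle_edges va"
    "distinct vb" "set vb = {..<n}" "b = cycle_edges vb"
    "distinct vc" "set vc = {..<n}" "c = cycle_edges vc"
    "{n - 2, 0} \<in># C" "{n - 1, 0} \<in># C"
    "{n - 2, 0} \<in># a" "{n - 1, 0} \<in># a" "{1, 2} \<in># a"
    "{n - 1, 1} \<in># b" "{0, 1} \<in># b" "{0, 2} \<in># b" "{n - 2, n - 1} \<in># b"
    "{n - 1, 1} \<in># c" "{0, 1} \<in># c" "{0, 2} \<in># c"
  using assms unfolding Pst_def ham_def by blast


lemma create3:
  assumes "Pst n Ms Fs m C a b c"
  shows "\<exists>Cold C' a' b' c'. Pst (n + 3) (Ms @ [m]) (Fs @ [Cold]) 3 C' a' b' c'"
proof -
  obtain vC va vb vc where n: "5 \<le> n" and cl: "cyc_list Ms Fs" and sum: "sum_list Fs + C + a + b + c = En n"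
    and vC: "distinct vC" "length vC = m" "3 \<le> m" "set vC \<subseteq> {..<n}" "C = cycle_edges vC"
    and va: "distinct va" "set va = {..<n}" "a = cycle_edges va"
    and vb: "distinct vb" "set vb = {..<n}" "b = cycle_edges vb"
    and vc: "distinct vc" "set vc = {..<n}" "c = cycle_edges vc"
    and f: "{n - 2, 0} \<in># C" "{n - 1, 0} \<in># C"
      "{n - 2, 0} \<in># a" "{n - 1, 0} \<in># a" "{1, 2} \<in># a"
      "{n - 1, 1} \<in># b" "{0, 1} \<in># b" "{0, 2} \<in># b" "{n - 2, n - 1} \<in># b"
      "{n - 1, 1} \<in># c" "{0, 1} \<in># c" "{0, 2} \<in># c"
    by (rule PstE[OF assms])
  have c3: "3 \<le> card {..<n}" using n by simp
  have dC1: "distinct ((n - 2) # [0] @ [n - 1])" using n by auto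
  have sC1: "set_mset (pe ((n - 2) # [0] @ [n - 1])) \<subseteq> set_mset C" using f by (simp add: insert_commute)
  have dC2: "distinct ((n - 2) # [n] @ [n - 1])" using n by auto
  have frC: "set [n] \<inter> set vC \<subseteq> set [0]" using vC(4) by auto
  obtain wC where wC: "distinct wC" "length wC + length [0::nat] = length vC + length [n]"
     "set wC = (set vC - set [0]) \<union> set [n]"
     "cycle_edges wC + pe ((n - 2) # [0] @ [n - 1]) = C + pe ((n - 2) # [n] @ [n - 1])"
    by (rule repl[OF vC(1) _ vC(5) dC1 sC1 dC2 frC]) (use vC(2,3) in simp)
  have da1: "distinct ((n - 2) # [0] @ [n - 1])" using n by auto
  have sa1: "set_mset (pe ((n - 2) # [0] @ [n - 1])) \<subseteq> set_mset a" using f by (simp add: insert_commute)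
  have da2: "distinct ((n - 2) # [n, n + 2, 0, n + 1] @ [n - 1])" using n by auto
  have fra: "set [n, n + 2, 0, n + 1] \<inter> {..<n} \<subseteq> set [0]" by auto
  obtain wa where wa: "distinct wa" "set wa = ({..<n} - set [0]) \<union> set [n, n + 2, 0, n + 1]"
     "cycle_edges wa + pe ((n - 2) # [0] @ [n - 1]) = a + pe ((n - 2) # [n, n + 2, 0, n + 1] @ [n - 1])"
    by (rule replV[OF va(1,2) c3 va(3) da1 sa1 da2 fra])
  have db1: "distinct ((n - 1) # [] @ [1])" using n by auto
  have sb1: "set_mset (pe ((n - 1) # [] @ [1])) \<subseteq> set_mset b" using f by simp
  have db2: "distinct ((n - 1) # [n + 1, n, n + 2] @ [1])" using n by auto
  have frb: "set [n + 1, n, n + 2] \<inter> {..<n} \<subseteq> set []" by auto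
  obtain wb where wb: "distinct wb" "set wb = ({..<n} - set []) \<union> set [n + 1, n, n + 2]"
     "cycle_edges wb + pe ((n - 1) # [] @ [1]) = b + pe ((n - 1) # [n + 1, n, n + 2] @ [1])"
    by (rule replV[OF vb(1,2) c3 vb(3) db1 sb1 db2 frb])
  have dc2: "distinct ((n - 1) # [n, n + 1, n + 2] @ [1])" using n by auto
  have sc1: "set_mset (pe ((n - 1) # [] @ [1])) \<subseteq> set_mset c" using f by simp
  have frc: "set [n, n + 1, n + 2] \<inter> {..<n} \<subseteq> set []" by auto
  obtain wc where wc: "distinct wc" "set wc = ({..<n} - set []) \<union> set [n, n + 1, n + 2]"
     "cycle_edges wc + pe ((n - 1) # [] @ [1]) = c + pe ((n - 1) # [n, n + 1, n + 2] @ [1])"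
    by (rule replV[OF vc(1,2) c3 vc(3) db1 sc1 dc2 frc])
  define C' where "C' = cycle_edges [n + 1, 0, n + 2]"
  have S: "sum_list Fs + cycle_edges wC + cycle_edges wa + cycle_edges wb + cycle_edges wc
     + (pe ((n - 2) # [0] @ [n - 1]) + pe ((n - 2) # [0] @ [n - 1]) + pe ((n - 1) # [] @ [1]) + pe ((n - 1) # [] @ [1]))
     = En n + (pe ((n - 2) # [n] @ [n - 1]) + pe ((n - 2) # [n, n + 2, 0, n + 1] @ [n - 1])
         + pe ((n - 1) # [n + 1, n, n + 2] @ [1]) + pe ((n - 1) # [n, n + 1, n + 2] @ [1]))"
    by (rule msum4[OF sum wC(4) wa(3) wb(3) wc(3)])
  have E: "En (n + 3) + (pe ((n - 2) # [0] @ [n - 1]) + pe ((n - 2) # [0] @ [n - 1]) + pe ((n - 1) # [] @ [1]) + pe ((n - 1) # [] @ [1]))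
     = En n + (pe ((n - 2) # [n] @ [n - 1]) + pe ((n - 2) # [n, n + 2, 0, n + 1] @ [n - 1])
         + pe ((n - 1) # [n + 1, n, n + 2] @ [1]) + pe ((n - 1) # [n, n + 1, n + 2] @ [1])) + C'"
    using n unfolding C'_def by (simp add: En_def B1_3 W1_def ce3 insert_commute add_mset_commute)
  have "sum_list Fs + cycle_edges wC + cycle_edges wa + cycle_edges wb + cycle_edges wc + C' + (pe ((n - 2) # [0] @ [n - 1]) + pe ((n - 2) # [0] @ [n - 1]) + pe ((n - 1) # [] @ [1]) + pe ((n - 1) # [] @ [1])) = (sum_list Fs + cycle_edges wC + cycle_edges wa + cycle_edges wb + cycle_edges wc + (pe ((n - 2) # [0] @ [n - 1]) + pe ((n - 2) # [0] @ [n - 1]) + pe ((n - 1) # [] @ [1]) + pe ((n - 1) # [] @ [1]))) + C'"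
    by (rule add_rc)
  also have "\<dots> = En n + (pe ((n - 2) # [n] @ [n - 1]) + pe ((n - 2) # [n, n + 2, 0, n + 1] @ [n - 1])
         + pe ((n - 1) # [n + 1, n, n + 2] @ [1]) + pe ((n - 1) # [n, n + 1, n + 2] @ [1])) + C'" using S by (simp only:)
  also have "\<dots> = En (n + 3) + (pe ((n - 2) # [0] @ [n - 1]) + pe ((n - 2) # [0] @ [n - 1]) + pe ((n - 1) # [] @ [1]) + pe ((n - 1) # [] @ [1]))" using E by (simp only:)
  finally have "sum_list Fs + cycle_edges wC + cycle_edges wa + cycle_edges wb + cycle_edges wc + C' = En (n + 3)" by (rule add_right_imp_eq)
  then have sum': "sum_list (Fs @ [cycle_edges wC]) + C' + cycle_edges wa + cycle_edges wc + cycle_edges wb = En (n + 3)"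
    by (simp add: add_ac)
  have g1: "cyc_list (Ms @ [m]) (Fs @ [cycle_edges wC])"
  proof -
    have "is_cycle m (cycle_edges wC)" unfolding is_cycle_def using wC vC by auto
    then show ?thesis using cl unfolding cyc_list_def by (auto simp: nth_append)
  qed
  have g2: "\<exists>vs. distinct vs \<and> length vs = 3 \<and> 3 \<le> (3::nat) \<and> set vs \<subseteq> {..<n + 3} \<and> C' = cycle_edges vs"
    using n unfolding C'_def by (intro exI[of _ "[n + 1, 0, n + 2]"]) auto
  have g3: "ham (n + 3) (cycle_edges wa)" "ham (n + 3) (cycle_edges wb)" "ham (n + 3) (cycle_edges wc)"
    by (rule ham_intro[OF wa(1)] ham_intro[OF wb(1)] ham_intro[OF wc(1)];
        use wa(2) wb(2) wc(2) n in \<open>simp only: lt3; auto\<close>)+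
  have g4: "{n + 3 - 2, 0} \<in># C'" "{n + 3 - 1, 0} \<in># C'"
    unfolding C'_def by (simp_all add: ce3 insert_commute)
  have g5: "{n + 3 - 2, 0} \<in># cycle_edges wa" "{n + 3 - 1, 0} \<in># cycle_edges wa" "{1, 2} \<in># cycle_edges wa"
    by (rule in_new[OF wa(3)]; use f n in \<open>auto simp: doubleton_eq_iff\<close>)+
  have g6: "{n + 3 - 1, 1} \<in># cycle_edges wc" "{0, 1} \<in># cycle_edges wc" "{0, 2} \<in># cycle_edges wc"
    "{n + 3 - 2, n + 3 - 1} \<in># cycle_edges wc"
    "{n + 3 - 1, 1} \<in># cycle_edges wb" "{0, 1} \<in># cycle_edges wb" "{0, 2} \<in># cycle_edges wb"
    by (rule in_new[OF wc(3)] in_new[OF wb(3)]; use f n in \<open>auto simp: doubleton_eq_iff\<close>)+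
  have n': "5 \<le> n + 3" using n by simp
  show ?thesis
    apply (rule exI[of _ "cycle_edges wC"], rule exI[of _ C'], rule exI[of _ "cycle_edges wa"],
        rule exI[of _ "cycle_edges wc"], rule exI[of _ "cycle_edges wb"])
    unfolding Pst_def using n' g1 g2 g3 g4 g5 g6 sum' by blast
qed

lemma create2P:
  assumes "Pst n Ms Fs m C a b c"
  shows "\<exists>Cold x y z. Qst (n + 2) (Ms @ [m]) (Fs @ [Cold]) x y z"
proof -
  obtain vC va vb vc where n: "5 \<le> n" and cl: "cyc_list Ms Fs" and sum: "sum_list Fs + C + a + b + c = En n"
    and vC: "distinct vC" "length vC = m" "3 \<le> m" "set vC \<subseteq> {..<n}" "C = cycle_edges vC"
    and va: "distinct va" "set va = {..<n}" "a = cycle_edges va"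
    and vb: "distinct vb" "set vb = {..<n}" "b = cycle_edges vb"
    and vc: "distinct vc" "set vc = {..<n}" "c = cycle_edges vc"
    and f: "{n - 2, 0} \<in># C" "{n - 1, 0} \<in># C"
      "{n - 2, 0} \<in># a" "{n - 1, 0} \<in># a" "{1, 2} \<in># a"
      "{n - 1, 1} \<in># b" "{0, 1} \<in># b" "{0, 2} \<in># b" "{n - 2, n - 1} \<in># b"
      "{n - 1, 1} \<in># c" "{0, 1} \<in># c" "{0, 2} \<in># c"
    by (rule PstE[OF assms])
  have c3: "3 \<le> card {..<n}" using n by simp
  have dC1: "distinct ((n - 2) # [0] @ [n - 1])" using n by auto
  have sC1: "set_mset (pe ((n - 2) # [0] @ [n - 1])) \<subseteq> set_mset C" using f by (simp add: insert_commute)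
  have dC2: "distinct ((n - 2) # [n] @ [n - 1])" using n by auto
  have frC: "set [n] \<inter> set vC \<subseteq> set [0]" using vC(4) by auto
  obtain wC where wC: "distinct wC" "length wC + length [0::nat] = length vC + length [n]"
     "set wC = (set vC - set [0]) \<union> set [n]"
     "cycle_edges wC + pe ((n - 2) # [0] @ [n - 1]) = C + pe ((n - 2) # [n] @ [n - 1])"
    by (rule repl[OF vC(1) _ vC(5) dC1 sC1 dC2 frC]) (use vC(2,3) in simp)
  have sa1: "set_mset (pe ((n - 2) # [0] @ [n - 1])) \<subseteq> set_mset a" using f by (simp add: insert_commute)
  have da2: "distinct ((n - 2) # [] @ [n - 1])" using n by auto
  have fra: "set [] \<inter> {..<n} \<subseteq> set [0]" by auto
  obtain wa1 where wa1: "distinct wa1" "set wa1 = ({..<n} - set [0]) \<union> set []"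
     "cycle_edges wa1 + pe ((n - 2) # [0] @ [n - 1]) = a + pe ((n - 2) # [] @ [n - 1])"
    by (rule replV[OF va(1,2) c3 va(3) dC1 sa1 da2 fra])
  have V1: "set wa1 = {..<n} - {0}" using wa1(2) by simp
  have c3': "3 \<le> card ({..<n} - {0})" using n by simp
  have db1: "distinct (2 # [] @ [1::nat])" by simp
  have "{2, 1} \<in># cycle_edges wa1"
    by (rule in_new[OF wa1(3)]) (use f n in \<open>auto simp: doubleton_eq_iff insert_commute\<close>)
  then have sb1: "set_mset (pe (2 # [] @ [1])) \<subseteq> set_mset (cycle_edges wa1)" by simp
  have db2: "distinct (2 # [0, n, n + 1] @ [1])" using n by auto
  have frb: "set [0, n, n + 1] \<inter> ({..<n} - {0}) \<subseteq> set []" by auto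
  obtain wa where wa: "distinct wa" "set wa = (({..<n} - {0}) - set []) \<union> set [0, n, n + 1]"
     "cycle_edges wa + pe (2 # [] @ [1]) = cycle_edges wa1 + pe (2 # [0, n, n + 1] @ [1])"
    by (rule replV[OF wa1(1) V1 c3' refl db1 sb1 db2 frb])
  have wa3: "cycle_edges wa + (pe ((n - 2) # [0] @ [n - 1]) + pe (2 # [] @ [1]))
     = a + (pe ((n - 2) # [] @ [n - 1]) + pe (2 # [0, n, n + 1] @ [1]))"
    by (rule comb[OF wa1(3) wa(3)])
  have dbb1: "distinct ((n - 2) # [n - 1] @ [1])" using n by auto
  have sbb1: "set_mset (pe ((n - 2) # [n - 1] @ [1])) \<subseteq> set_mset b" using f by (simp add: insert_commute)
  have dbb2: "distinct ((n - 2) # [n, n - 1, n + 1] @ [1])" using n by auto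
  have frbb: "set [n, n - 1, n + 1] \<inter> {..<n} \<subseteq> set [n - 1]" by auto
  obtain wb where wb: "distinct wb" "set wb = ({..<n} - set [n - 1]) \<union> set [n, n - 1, n + 1]"
     "cycle_edges wb + pe ((n - 2) # [n - 1] @ [1]) = b + pe ((n - 2) # [n, n - 1, n + 1] @ [1])"
    by (rule replV[OF vb(1,2) c3 vb(3) dbb1 sbb1 dbb2 frbb])
  have dc1: "distinct ((n - 1) # [1, 0] @ [2])" using n by auto
  have sc1: "set_mset (pe ((n - 1) # [1, 0] @ [2])) \<subseteq> set_mset c" using f by (simp add: insert_commute)
  have dc2: "distinct ((n - 1) # [n + 1, n, 0, 1] @ [2])" using n by auto
  have frc: "set [n + 1, n, 0, 1] \<inter> {..<n} \<subseteq> set [1, 0]" by auto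
  obtain wc where wc: "distinct wc" "set wc = ({..<n} - set [1, 0]) \<union> set [n + 1, n, 0, 1]"
     "cycle_edges wc + pe ((n - 1) # [1, 0] @ [2]) = c + pe ((n - 1) # [n + 1, n, 0, 1] @ [2])"
    by (rule replV[OF vc(1,2) c3 vc(3) dc1 sc1 dc2 frc])
  define X where "X = pe ((n - 2) # [0] @ [n - 1]) + (pe ((n - 2) # [0] @ [n - 1]) + pe (2 # [] @ [1]))
      + pe ((n - 2) # [n - 1] @ [1]) + pe ((n - 1) # [1, 0] @ [2])"
  define Y where "Y = pe ((n - 2) # [n] @ [n - 1]) + (pe ((n - 2) # [] @ [n - 1]) + pe (2 # [0, n, n + 1] @ [1]))
      + pe ((n - 2) # [n, n - 1, n + 1] @ [1]) + pe ((n - 1) # [n + 1, n, 0, 1] @ [2])"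
  define C' where "C' = cycle_edges [n + 1, 0]"
  define L where "L = sum_list Fs + cycle_edges wC + cycle_edges wa + cycle_edges wb + cycle_edges wc"
  have S: "L + X = En n + Y"
    unfolding L_def X_def Y_def by (rule msum4[OF sum wC(4) wa3 wb(3) wc(3)])
  have E: "En (n + 2) + X = En n + Y + C'"
    using n unfolding X_def Y_def C'_def by (simp add: En_def B1_SS W1_def ce2 insert_commute add_mset_commute)
  have "L + C' + X = (L + X) + C'" by (rule add_rc)
  also have "\<dots> = En n + Y + C'" using S by (simp only:)
  also have "\<dots> = En (n + 2) + X" using E by (simp only:)
  finally have sumL: "L + C' = En (n + 2)" by (rule add_right_imp_eq)
  have sum': "sum_list (Fs @ [cycle_edges wC]) + cycle_edges [n + 2 - 1, 0] + cycle_edges wa + cycle_edges wc + cycle_edges wb = En (n + 2)"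
    using sumL unfolding L_def C'_def by (simp add: add_ac)
  have g1: "cyc_list (Ms @ [m]) (Fs @ [cycle_edges wC])"
    by (rule cyc_list_snoc[OF cl]) (use wC vC in \<open>auto simp: is_cycle_def\<close>)
  have h1: "ham (n + 2) (cycle_edges wa)" by (rule ham_intro[OF wa(1)]) (use wa(2) n in \<open>simp only: lt2; auto\<close>)
  have h2: "ham (n + 2) (cycle_edges wc)" by (rule ham_intro[OF wc(1)]) (use wc(2) n in \<open>simp only: lt2; auto\<close>)
  have h3: "ham (n + 2) (cycle_edges wb)" by (rule ham_intro[OF wb(1)]) (use wb(2) n in \<open>simp only: lt2; auto\<close>)
  have x: "{n + 2 - 2, 0} \<in># cycle_edges wa" "{n + 2 - 1, 1} \<in># cycle_edges wa" "{0, 2} \<in># cycle_edges wa"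
    by (rule in_cnt[OF wa3]; use f n in \<open>auto simp: doubleton_eq_iff\<close>)+
  have y: "{n + 2 - 2, 0} \<in># cycle_edges wc" "{0, 1} \<in># cycle_edges wc" "{1, 2} \<in># cycle_edges wc"
    by (rule in_cnt[OF wc(3)]; use f n in \<open>auto simp: doubleton_eq_iff\<close>)+
  have z: "{n + 2 - 1, 1} \<in># cycle_edges wb" "{0, 1} \<in># cycle_edges wb" "{0, 2} \<in># cycle_edges wb"
    by (rule in_cnt[OF wb(3)]; use f n in \<open>auto simp: doubleton_eq_iff\<close>)+
  have n': "5 \<le> n + 2" using n by simp
  have "Qst (n + 2) (Ms @ [m]) (Fs @ [cycle_edges wC]) (cycle_edges wa) (cycle_edges wc) (cycle_edges wb)"
    by (rule Qst_intro[OF n' g1 h1 h2 h3 sum' x y z])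
  then show ?thesis by blast
qed

lemma create2Q:
  assumes "Qst n Ms Fs x y z"
  shows "\<exists>Cold x' y' z'. Qst (n + 2) (Ms @ [2]) (Fs @ [Cold]) x' y' z'"
proof -
  obtain vx vy vz where n: "5 \<le> n" and cl: "cyc_list Ms Fs"
    and sum: "sum_list Fs + cycle_edges [n - 1, 0] + x + y + z = En n"
    and vx: "distinct vx" "set vx = {..<n}" "x = cycle_edges vx"
    and vy: "distinct vy" "set vy = {..<n}" "y = cycle_edges vy"
    and vz: "distinct vz" "set vz = {..<n}" "z = cycle_edges vz"
    and f: "{n - 2, 0} \<in># x" "{n - 1, 1} \<in># x" "{0, 2} \<in># x"
      "{n - 2, 0} \<in># y" "{0, 1} \<in># y" "{1, 2} \<in># y"
      "{n - 1, 1} \<in># z" "{0, 1} \<in># z" "{0, 2} \<in># z"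
    by (rule QstE[OF assms])
  have c3: "3 \<le> card {..<n}" using n by simp
  have lx: "length vx = n" using vx distinct_card by fastforce
  have ne1: "n - 2 \<noteq> 0" "n - 1 \<noteq> 1" using n by auto
  have nx: "n \<notin> set vx" using vx(2) by auto
  obtain wx1 where wx1: "distinct wx1" "length wx1 = Suc (length vx)" "set wx1 = insert n (set vx)"
      "cycle_edges wx1 + {#{n - 2, 0}#} = x + {#{n - 2, n}, {n, 0}#}"
    by (rule subdiv[OF vx(1) _ vx(3) ne1(1) f(1) nx]) (use lx n in simp)
  have e2: "{n - 1, 1} \<in># cycle_edges wx1"
    by (rule in_new[OF wx1(4)]) (use f n in \<open>auto simp: doubleton_eq_iff\<close>)
  have nx1: "n + 1 \<notin> set wx1" using wx1(3) vx(2) by auto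
  obtain wx where wx: "distinct wx" "length wx = Suc (length wx1)" "set wx = insert (n + 1) (set wx1)"
      "cycle_edges wx + {#{n - 1, 1}#} = cycle_edges wx1 + {#{n - 1, n + 1}, {n + 1, 1}#}"
    by (rule subdiv[OF wx1(1) _ refl ne1(2) e2 nx1]) (use wx1(2) lx n in simp)
  have wx3: "cycle_edges wx + ({#{n - 2, 0}#} + {#{n - 1, 1}#})
      = x + ({#{n - 2, n}, {n, 0}#} + {#{n - 1, n + 1}, {n + 1, 1}#})"
    by (rule comb[OF wx1(4) wx(4)])
  have dy1: "distinct ((n - 2) # [0, 1] @ [2])" using n by auto
  have sy1: "set_mset (pe ((n - 2) # [0, 1] @ [2])) \<subseteq> set_mset y" using f by (simp add: insert_commute)
  have dy2: "distinct ((n - 2) # [n, n + 1, 1, 0] @ [2])" using n by auto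
  have fry: "set [n, n + 1, 1, 0] \<inter> {..<n} \<subseteq> set [0, 1]" by auto
  obtain wy where wy: "distinct wy" "set wy = ({..<n} - set [0, 1]) \<union> set [n, n + 1, 1, 0]"
     "cycle_edges wy + pe ((n - 2) # [0, 1] @ [2]) = y + pe ((n - 2) # [n, n + 1, 1, 0] @ [2])"
    by (rule replV[OF vy(1,2) c3 vy(3) dy1 sy1 dy2 fry])
  have dz1: "distinct ((n - 1) # [1, 0] @ [2])" using n by auto
  have sz1: "set_mset (pe ((n - 1) # [1, 0] @ [2])) \<subseteq> set_mset z" using f by (simp add: insert_commute)
  have dz2: "distinct ((n - 1) # [n + 1, n, 0, 1] @ [2])" using n by auto
  have frz: "set [n + 1, n, 0, 1] \<inter> {..<n} \<subseteq> set [1, 0]" by auto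
  obtain wz where wz: "distinct wz" "set wz = ({..<n} - set [1, 0]) \<union> set [n + 1, n, 0, 1]"
     "cycle_edges wz + pe ((n - 1) # [1, 0] @ [2]) = z + pe ((n - 1) # [n + 1, n, 0, 1] @ [2])"
    by (rule replV[OF vz(1,2) c3 vz(3) dz1 sz1 dz2 frz])
  have wC: "cycle_edges [n - 1, n] + cycle_edges [n - 1, 0] = cycle_edges [n - 1, 0] + cycle_edges [n - 1, n]"
    by (rule add.commute)
  define X where "X = cycle_edges [n - 1, 0] + ({#{n - 2, 0}#} + {#{n - 1, 1}#})
      + pe ((n - 2) # [0, 1] @ [2]) + pe ((n - 1) # [1, 0] @ [2])"
  define Y where "Y = cycle_edges [n - 1, n] + ({#{n - 2, n}, {n, 0}#} + {#{n - 1, n + 1}, {n + 1, 1}#})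
      + pe ((n - 2) # [n, n + 1, 1, 0] @ [2]) + pe ((n - 1) # [n + 1, n, 0, 1] @ [2])"
  define C' where "C' = cycle_edges [n + 1, 0]"
  define L where "L = sum_list Fs + cycle_edges [n - 1, n] + cycle_edges wx + cycle_edges wy + cycle_edges wz"
  have S: "L + X = En n + Y"
    unfolding L_def X_def Y_def by (rule msum4[OF sum wC wx3 wy(3) wz(3)])
  have E: "En (n + 2) + X = En n + Y + C'"
    using n unfolding X_def Y_def C'_def by (simp add: En_def B1_SS W1_def ce2 insert_commute add_mset_commute)
  have "L + C' + X = (L + X) + C'" by (rule add_rc)
  also have "\<dots> = En n + Y + C'" using S by (simp only:)
  also have "\<dots> = En (n + 2) + X" using E by (simp only:)
  finally have sumL: "L + C' = En (n + 2)" by (rule add_right_imp_eq)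
  have sum': "sum_list (Fs @ [cycle_edges [n - 1, n]]) + cycle_edges [n + 2 - 1, 0] + cycle_edges wx + cycle_edges wz + cycle_edges wy = En (n + 2)"
    using sumL unfolding L_def C'_def by (simp add: add_ac)
  have g1: "cyc_list (Ms @ [2]) (Fs @ [cycle_edges [n - 1, n]])"
    by (rule cyc_list_snoc[OF cl]) (use n in \<open>auto simp: is_cycle_def intro!: exI[of _ "[n - 1, n]"]\<close>)
  have h1: "ham (n + 2) (cycle_edges wx)" by (rule ham_intro[OF wx(1)]) (use wx(3) wx1(3) vx(2) n in \<open>simp only: lt2; auto\<close>)
  have h2: "ham (n + 2) (cycle_edges wz)" by (rule ham_intro[OF wz(1)]) (use wz(2) n in \<open>simp only: lt2; auto\<close>)
  have h3: "ham (n + 2) (cycle_edges wy)" by (rule ham_intro[OF wy(1)]) (use wy(2) n in \<open>simp only: lt2; auto\<close>)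
  have gx: "{n + 2 - 2, 0} \<in># cycle_edges wx" "{n + 2 - 1, 1} \<in># cycle_edges wx" "{0, 2} \<in># cycle_edges wx"
    by (rule in_cnt[OF wx3]; use f n in \<open>auto simp: doubleton_eq_iff\<close>)+
  have gy: "{n + 2 - 2, 0} \<in># cycle_edges wz" "{0, 1} \<in># cycle_edges wz" "{1, 2} \<in># cycle_edges wz"
    by (rule in_cnt[OF wz(3)]; use f n in \<open>auto simp: doubleton_eq_iff\<close>)+
  have gz: "{n + 2 - 1, 1} \<in># cycle_edges wy" "{0, 1} \<in># cycle_edges wy" "{0, 2} \<in># cycle_edges wy"
    by (rule in_cnt[OF wy(3)]; use f n in \<open>auto simp: doubleton_eq_iff\<close>)+
  have n': "5 \<le> n + 2" using n by simp
  have "Qst (n + 2) (Ms @ [2]) (Fs @ [cycle_edges [n - 1, n]]) (cycle_edges wx) (cycle_edges wz) (cycle_edges wy)"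
    by (rule Qst_intro[OF n' g1 h1 h2 h3 sum' gx gy gz])
  then show ?thesis by blast
qed

lemma En5: "En 5 = {#{0,1},{1,2},{2,3},{3,4},{0,2},{1,3},{2,4},{4,0},{3,0},{4,1},
                     {0,1},{1,2},{2,3},{3,4},{0,2},{1,3},{2,4},{4,0},{3,0},{4,1}#}"
  by (simp add: En_def B1_def W1_def sh_def lo_def insert_commute add_mset_commute numeral_eq_Suc lessThan_Suc)

lemma lt5: "{..<5::nat} = {0,1,2,3,4}" by auto
lemma lt6: "{..<6::nat} = {0,1,2,3,4,5}" by auto
lemma lt7: "{..<7::nat} = {0,1,2,3,4,5,6}" by auto

lemma base5: "Pst 5 [] [] 5 (cycle_edges [1,3,0,4,2]) (cycle_edges [0,3,1,2,4]) (cycle_edges [0,1,4,3,2]) (cycle_edges [0,1,4,3,2])"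
  unfolding Pst_def ham_def cyc_list_def
  apply (intro conjI)
  apply simp
  apply simp
  apply simp
  apply (rule exI[of _ "[1,3,0,4,2]"]; simp)
  apply (rule exI[of _ "[0,3,1,2,4]"]; simp add: lt5 insert_commute)
  apply (rule exI[of _ "[0,1,4,3,2]"]; simp add: lt5 insert_commute)
  apply (rule exI[of _ "[0,1,4,3,2]"]; simp add: lt5 insert_commute)
  apply (simp add: En5 ce_pe insert_commute add_mset_commute)
  apply (simp_all add: ce_pe insert_commute)
  done

lemma is_cycle_ce: "distinct vs \<Longrightarrow> length vs = m \<Longrightarrow> 2 \<le> m \<Longrightarrow> is_cycle m (cycle_edges vs)"
  unfolding is_cycle_def by blast

lemma Pst_intro:
  assumes "5 \<le> n" "cyc_list Ms Fs" "distinct vC" "length vC = m" "3 \<le> m" "set vC \<subseteq> {..<n}"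
    "ham n a" "ham n b" "ham n c" "sum_list Fs + cycle_edges vC + a + b + c = En n"
    "{n - 2, 0} \<in># cycle_edges vC" "{n - 1, 0} \<in># cycle_edges vC"
    "{n - 2, 0} \<in># a" "{n - 1, 0} \<in># a" "{1, 2} \<in># a"
    "{n - 1, 1} \<in># b" "{0, 1} \<in># b" "{0, 2} \<in># b" "{n - 2, n - 1} \<in># b"
    "{n - 1, 1} \<in># c" "{0, 1} \<in># c" "{0, 2} \<in># c"
  shows "Pst n Ms Fs m (cycle_edges vC) a b c"
  unfolding Pst_def using assms by blast

definition Preach :: "nat \<Rightarrow> nat list \<Rightarrow> bool" where
  "Preach n L \<longleftrightarrow> (\<exists>Ms Fs m C a b c. Pst n Ms Fs m C a b c \<and> L = Ms @ [m])"
definition Qreach :: "nat \<Rightarrow> nat list \<Rightarrow> bool" where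
  "Qreach n L \<longleftrightarrow> (\<exists>Ms Fs x y z. Qst n Ms Fs x y z \<and> L = Ms @ [2])"

lemma reach5: "Preach 5 [5]" unfolding Preach_def using base5 by fastforce

lemma En6: "En 6 = {#{0,1},{1,2},{2,3},{3,4},{4,5},{5,0},{0,2},{1,3},{2,4},{3,5},{4,0},{5,1},{0,1},{1,2},{2,3},{3,4},{4,5},{5,0},{0,2},{1,3},{2,4},{3,5},{4,0},{5,1}#}"
  by (simp add: En_def B1_def W1_def sh_def lo_def insert_commute add_mset_commute numeral_eq_Suc lessThan_Suc)

lemma En7: "En 7 = {#{0,1},{1,2},{2,3},{3,4},{4,5},{5,6},{6,0},{0,2},{1,3},{2,4},{3,5},{4,6},{5,0},{6,1},{0,1},{1,2},{2,3},{3,4},{4,5},{5,6},{6,0},{0,2},{1,3},{2,4},{3,5},{4,6},{5,0},{6,1}#}"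
  by (simp add: En_def B1_def W1_def sh_def lo_def insert_commute add_mset_commute numeral_eq_Suc lessThan_Suc)

lemma baseP0: "Pst 6 [3] [cycle_edges [1,3,2]] 3 (cycle_edges [4,0,5]) (cycle_edges [0,4,2,1,3,5]) (cycle_edges [0,1,5,4,3,2]) (cycle_edges [0,1,5,3,4,2])"
proof (rule Pst_intro)
  show "cyc_list [3] [cycle_edges [1,3,2]]" unfolding cyc_list_def by (auto simp: less_Suc_eq nth_Cons' intro!: is_cycle_ce)
  show "ham 6 (cycle_edges [0,4,2,1,3,5])" "ham 6 (cycle_edges [0,1,5,4,3,2])" "ham 6 (cycle_edges [0,1,5,3,4,2])"
    by (rule ham_intro; simp add: lt6 insert_commute)+
  show "sum_list [cycle_edges [1,3,2]] + cycle_edges [4,0,5] + cycle_edges [0,4,2,1,3,5] + cycle_edges [0,1,5,4,3,2] + cycle_edges [0,1,5,3,4,2] = En 6"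
    by (simp add: En6 ce_pe insert_commute add_mset_commute)
qed (simp_all add: ce_pe insert_commute lt6)

lemma reachP0: "Preach 6 [3,3]" unfolding Preach_def using baseP0 by fastforce

lemma baseP1: "Pst 7 [4] [cycle_edges [1,3,4,2]] 3 (cycle_edges [5,0,6]) (cycle_edges [0,5,3,1,2,4,6]) (cycle_edges [0,1,6,5,4,3,2]) (cycle_edges [0,1,6,4,5,3,2])"
proof (rule Pst_intro)
  show "cyc_list [4] [cycle_edges [1,3,4,2]]" unfolding cyc_list_def by (auto simp: less_Suc_eq nth_Cons' intro!: is_cycle_ce)
  show "ham 7 (cycle_edges [0,5,3,1,2,4,6])" "ham 7 (cycle_edges [0,1,6,5,4,3,2])" "ham 7 (cycle_edges [0,1,6,4,5,3,2])"
    by (rule ham_intro; simp add: lt7 insert_commute)+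
  show "sum_list [cycle_edges [1,3,4,2]] + cycle_edges [5,0,6] + cycle_edges [0,5,3,1,2,4,6] + cycle_edges [0,1,6,5,4,3,2] + cycle_edges [0,1,6,4,5,3,2] = En 7"
    by (simp add: En7 ce_pe insert_commute add_mset_commute)
qed (simp_all add: ce_pe insert_commute lt7)

lemma reachP1: "Preach 7 [4,3]" unfolding Preach_def using baseP1 by fastforce

lemma baseQ2: "Qst 5 [3] [cycle_edges [1,3,2]] (cycle_edges [0,2,4,1,3]) (cycle_edges [0,1,2,4,3]) (cycle_edges [0,1,4,3,2])"
proof (rule Qst_intro)
  show "cyc_list [3] [cycle_edges [1,3,2]]" unfolding cyc_list_def by (auto simp: less_Suc_eq nth_Cons' intro!: is_cycle_ce)
  show "ham 5 (cycle_edges [0,2,4,1,3])" "ham 5 (cycle_edges [0,1,2,4,3])" "ham 5 (cycle_edges [0,1,4,3,2])"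
    by (rule ham_intro; simp add: lt5 insert_commute)+
  show "sum_list [cycle_edges [1,3,2]] + cycle_edges [5 - 1, 0] + cycle_edges [0,2,4,1,3] + cycle_edges [0,1,2,4,3] + cycle_edges [0,1,4,3,2] = En 5"
    by (simp add: En5 ce_pe insert_commute add_mset_commute)
qed (simp_all add: ce_pe insert_commute)

lemma reachQ2: "Qreach 5 [3,2]" unfolding Qreach_def using baseQ2 by fastforce

lemma baseQ3: "Qst 6 [4] [cycle_edges [1,3,4,2]] (cycle_edges [0,2,3,1,5,4]) (cycle_edges [0,1,2,3,5,4]) (cycle_edges [0,1,5,3,4,2])"
proof (rule Qst_intro)
  show "cyc_list [4] [cycle_edges [1,3,4,2]]" unfolding cyc_list_def by (auto simp: less_Suc_eq nth_Cons' intro!: is_cycle_ce)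
  show "ham 6 (cycle_edges [0,2,3,1,5,4])" "ham 6 (cycle_edges [0,1,2,3,5,4])" "ham 6 (cycle_edges [0,1,5,3,4,2])"
    by (rule ham_intro; simp add: lt6 insert_commute)+
  show "sum_list [cycle_edges [1,3,4,2]] + cycle_edges [6 - 1, 0] + cycle_edges [0,2,3,1,5,4] + cycle_edges [0,1,2,3,5,4] + cycle_edges [0,1,5,3,4,2] = En 6"
    by (simp add: En6 ce_pe insert_commute add_mset_commute)
qed (simp_all add: ce_pe insert_commute)

lemma reachQ3: "Qreach 6 [4,2]" unfolding Qreach_def using baseQ3 by fastforce

lemma baseQ4: "Qst 6 [2,2] [cycle_edges [1,3], cycle_edges [2,4]] (cycle_edges [0,2,1,5,3,4]) (cycle_edges [0,1,2,3,5,4]) (cycle_edges [0,1,5,4,3,2])"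
proof (rule Qst_intro)
  show "cyc_list [2,2] [cycle_edges [1,3], cycle_edges [2,4]]" unfolding cyc_list_def by (auto simp: less_Suc_eq nth_Cons' intro!: is_cycle_ce)
  show "ham 6 (cycle_edges [0,2,1,5,3,4])" "ham 6 (cycle_edges [0,1,2,3,5,4])" "ham 6 (cycle_edges [0,1,5,4,3,2])"
    by (rule ham_intro; simp add: lt6 insert_commute)+
  show "sum_list [cycle_edges [1,3], cycle_edges [2,4]] + cycle_edges [6 - 1, 0] + cycle_edges [0,2,1,5,3,4] + cycle_edges [0,1,2,3,5,4] + cycle_edges [0,1,5,4,3,2] = En 6"
    by (simp add: En6 ce_pe insert_commute add_mset_commute)
qed (simp_all add: ce_pe insert_commute)

lemma reachQ4: "Qreach 6 [2,2,2]" unfolding Qreach_def using baseQ4 by fastforce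


lemma P_grow1: "Preach n (L @ [m]) \<Longrightarrow> Preach (Suc n) (L @ [Suc m])"
  unfolding Preach_def using grow by fastforce

lemma P_grow: "Preach n (L @ [m]) \<Longrightarrow> Preach (n + k) (L @ [m + k])"
  by (induction k) (auto intro: P_grow1)

lemma P_add3: "Preach n L \<Longrightarrow> Preach (n + 3) (L @ [3])"
  unfolding Preach_def using create3 by fastforce

lemma P_add: "Preach n L \<Longrightarrow> 3 \<le> x \<Longrightarrow> Preach (n + x) (L @ [x])"
  using P_grow[OF P_add3, of n L "x - 3"] by simp

lemma P_adds: "Preach n L \<Longrightarrow> \<forall>x\<in>set xs. 3 \<le> x \<Longrightarrow> Preach (n + sum_list xs) (L @ xs)"
proof (induction xs arbitrary: n L)
  case Nil then show ?case by simp
next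
  case (Cons x xs)
  have "Preach (n + x) (L @ [x])" using P_add Cons.prems by simp
  then have "Preach (n + x + sum_list xs) ((L @ [x]) @ xs)" by (rule Cons.IH) (use Cons.prems in simp)
  then show ?case by (simp add: add.assoc)
qed

lemma PQ: "Preach n L \<Longrightarrow> Qreach (n + 2) (L @ [2])"
  unfolding Preach_def Qreach_def using create2P by fastforce

lemma QQ: "Qreach n L \<Longrightarrow> Qreach (n + 2) (L @ [2])"
  unfolding Qreach_def using create2Q by fastforce

lemma Q_adds: "Qreach n L \<Longrightarrow> Qreach (n + 2 * k) (L @ replicate k 2)"
proof (induction k arbitrary: n L)
  case 0 then show ?case by simp
next
  case (Suc k)
  have "Qreach (n + 2 + 2 * k) ((L @ [2]) @ replicate k 2)" using Suc.IH QQ[OF Suc.prems] by blast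
  then show ?case by (simp add: replicate_append_same[symmetric] add.assoc)
qed

lemma twos: "Preach n L \<Longrightarrow> Preach (n + 2 * k) (L @ replicate k 2) \<or> Qreach (n + 2 * k) (L @ replicate k 2)"
proof (cases k)
  case 0 then show "Preach n L \<Longrightarrow> ?thesis" by simp
next
  case (Suc j)
  assume "Preach n L"
  then have "Qreach (n + 2 + 2 * j) ((L @ [2]) @ replicate j 2)" using PQ Q_adds by blast
  then show ?thesis using Suc by (simp add: replicate_append_same[symmetric] add.assoc)
qed

lemma cyc_decomp: "cyc_list Ms Fs \<Longrightarrow> sum_list Fs = G \<Longrightarrow> has_cycle_decomp Ms G"
  unfolding cyc_list_def has_cycle_decomp_def by (intro exI[of _ Fs]) auto

lemma ham_cycle: "5 \<le> n \<Longrightarrow> ham n H \<Longrightarrow> is_cycle n H"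
proof -
  assume n: "5 \<le> n" and "ham n H"
  then obtain vs where vs: "distinct vs" "set vs = {..<n}" "H = cycle_edges vs" unfolding ham_def by blast
  then have "length vs = n" using distinct_card[OF vs(1)] by simp
  then show ?thesis using vs n unfolding is_cycle_def by auto
qed

lemma Pfinal: "Preach n L \<Longrightarrow> has_cycle_decomp (L @ [n, n, n]) (mult_graph 2 (circulant {1, 2} n))"
proof -
  assume "Preach n L"
  then obtain Ms Fs m C a b c where P: "Pst n Ms Fs m C a b c" and L: "L = Ms @ [m]"
    unfolding Preach_def by blast
  obtain vC va vb vc where n: "5 \<le> n" and cl: "cyc_list Ms Fs" and sum: "sum_list Fs + C + a + b + c = En n"
    and vC: "distinct vC" "length vC = m" "3 \<le> m" "set vC \<subseteq> {..<n}" "C = cycle_edges vC"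
    by (rule PstE[OF P])
  have ha: "ham n a" "ham n b" "ham n c" using P unfolding Pst_def by auto
  have "cyc_list (((Ms @ [m]) @ [n]) @ [n] @ [n]) (((Fs @ [C]) @ [a]) @ [b] @ [c])"
    unfolding append_assoc[symmetric]
    by (intro cyc_list_snoc cl ham_cycle[OF n] ha) (use vC in \<open>auto intro!: is_cycle_ce\<close>)
  moreover have "sum_list (((Fs @ [C]) @ [a]) @ [b] @ [c]) = mult_graph 2 (circulant {1, 2} n)"
    using sum circ_En[OF n] by (simp add: add.assoc)
  ultimately show ?thesis using L by (intro cyc_decomp) auto
qed

lemma Qfinal: "Qreach n L \<Longrightarrow> has_cycle_decomp (L @ [n, n, n]) (mult_graph 2 (circulant {1, 2} n))"
proof -
  assume "Qreach n L"
  then obtain Ms Fs x y z where Q: "Qst n Ms Fs x y z" and L: "L = Ms @ [2]"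
    unfolding Qreach_def by blast
  obtain vx vy vz where n: "5 \<le> n" and cl: "cyc_list Ms Fs"
    and sum: "sum_list Fs + cycle_edges [n - 1, 0] + x + y + z = En n"
    by (rule QstE[OF Q])
  have ha: "ham n x" "ham n y" "ham n z" using Q unfolding Qst_def by auto
  have c2: "is_cycle 2 (cycle_edges [n - 1, 0])" using n by (intro is_cycle_ce) auto
  have "cyc_list (((Ms @ [2]) @ [n]) @ [n] @ [n]) (((Fs @ [cycle_edges [n - 1, 0]]) @ [x]) @ [y] @ [z])"
    unfolding append_assoc[symmetric]
    by (intro cyc_list_snoc cl ham_cycle[OF n] ha c2)
  moreover have "sum_list (((Fs @ [cycle_edges [n - 1, 0]]) @ [x]) @ [y] @ [z]) = mult_graph 2 (circulant {1, 2} n)"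
    using sum circ_En[OF n] by (simp add: add.assoc)
  ultimately show ?thesis using L by (intro cyc_decomp) auto
qed

lemma perm_pairs: "mset (map fst ps) = mset M \<Longrightarrow> \<exists>ps'. mset ps' = mset ps \<and> map fst ps' = M"
proof (induction M arbitrary: ps)
  case Nil then show ?case by simp
next
  case (Cons x M)
  have "x \<in># mset (map fst ps)" using Cons.prems by simp
  then obtain c where xc: "(x, c) \<in> set ps" by auto
  let ?ps0 = "remove1 (x, c) ps"
  have "mset (map fst ?ps0) = mset (map fst ps) - {#x#}"
    using xc by (simp add: mset_map image_mset_Diff)
  also have "\<dots> = mset M" using Cons.prems by simp
  finally obtain ps0' where ps0': "mset ps0' = mset ?ps0" "map fst ps0' = M" using Cons.IH by blast
  have "mset ((x, c) # ps0') = mset ps" using ps0'(1) xc by simp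
  then show ?case using ps0'(2) by (intro exI[of _ "(x, c) # ps0'"]) auto
qed

lemma decomp_perm:
  assumes "has_cycle_decomp L G" "mset L = mset M"
  shows "has_cycle_decomp M G"
proof -
  obtain Cs where Cs: "length Cs = length L" "\<forall>i<length L. is_cycle (L ! i) (Cs ! i)" "sum_list Cs = G"
    using assms(1) unfolding has_cycle_decomp_def by blast
  let ?ps = "zip L Cs"
  have "map fst ?ps = L" using Cs(1) by simp
  then obtain ps' where ps': "mset ps' = mset ?ps" "map fst ps' = M"
    using perm_pairs[of ?ps M] assms(2) by auto
  have good: "\<And>p. p \<in> set ps' \<Longrightarrow> is_cycle (fst p) (snd p)"
  proof -
    fix p assume "p \<in> set ps'"
    then have "p \<in> set ?ps" using ps'(1) by (metis set_mset_mset)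
    then obtain i where "i < length ?ps" "p = ?ps ! i" by (auto simp: in_set_conv_nth)
    then show "is_cycle (fst p) (snd p)" using Cs by simp
  qed
  have "length (map snd ps') = length M" using ps'(2) by (metis length_map)
  moreover have "\<forall>i<length M. is_cycle (M ! i) (map snd ps' ! i)"
  proof (intro allI impI)
    fix i assume i: "i < length M"
    then have i': "i < length ps'" using ps'(2) by (metis length_map)
    have "M ! i = fst (ps' ! i)" using ps'(2) i' by auto
    then show "is_cycle (M ! i) (map snd ps' ! i)" using good[of "ps' ! i"] i' by simp
  qed
  moreover have "sum_list (map snd ps') = G"
  proof -
    have "sum_list (map snd ps') = sum_mset (image_mset snd (mset ps'))"
      by (simp add: sum_mset_sum_list[symmetric])
    also have "\<dots> = sum_mset (image_mset snd (mset ?ps))" using ps'(1) by simp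
    also have "\<dots> = sum_list (map snd ?ps)" by (simp add: sum_mset_sum_list[symmetric])
    also have "map snd ?ps = Cs" using Cs(1) by simp
    finally show ?thesis using Cs(3) by simp
  qed
  ultimately show ?thesis unfolding has_cycle_decomp_def by blast
qed

definition reach :: "nat \<Rightarrow> nat list \<Rightarrow> bool" where
  "reach n L \<longleftrightarrow> Preach n L \<or> Qreach n L"

lemma twos_reach: "Preach n L \<Longrightarrow> reach (n + 2 * k) (L @ replicate k 2)"
  using twos unfolding reach_def by blast

lemma exists_L:
  assumes M2: "\<forall>x\<in>set M. 2 \<le> x" and s5: "5 \<le> sum_list M"
  shows "\<exists>L. mset L = mset M \<and> reach (sum_list L) L"
proof -
  define B where "B = filter (\<lambda>x. 3 \<le> x) M"
  define T where "T = filter (\<lambda>x. \<not> 3 \<le> x) M"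
  define k where "k = length T"
  have T2: "\<forall>x\<in>set T. x = 2" using M2 unfolding T_def by auto
  have Tk: "T = replicate k 2" unfolding k_def using T2 by (metis replicate_length_same)
  have "mset M = mset B + mset T"
    unfolding B_def T_def mset_filter by (rule multiset_partition)
  then have mM: "mset M = mset B + mset (replicate k 2)" using Tk by simp
  have sM: "sum_list M = sum_list B + 2 * k"
  proof -
    have "mset M = mset (B @ replicate k 2)" using mM by simp
    then have "sum_list M = sum_list (B @ replicate k 2)" by (metis sum_mset_sum_list)
    then show ?thesis by (simp add: sum_list_replicate)
  qed
  have B3: "\<forall>x\<in>set B. 3 \<le> x" unfolding B_def by auto
  show ?thesis
  proof (cases "B = []")
    case True
    then have k3: "3 \<le> k" using sM s5 by simp
    have "Qreach (6 + 2 * (k - 3)) ([2, 2, 2] @ replicate (k - 3) 2)"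
      by (rule Q_adds[OF reachQ4])
    moreover have "[2, 2, 2] @ replicate (k - 3) 2 = replicate k (2::nat)"
    proof -
      have "replicate k (2::nat) = replicate (3 + (k - 3)) 2" using k3 by simp
      then show ?thesis by (simp only: replicate_add) (simp add: numeral_3_eq_3)
    qed
    moreover have "6 + 2 * (k - 3) = sum_list (replicate k (2::nat))" using k3 by (simp add: sum_list_replicate)
    ultimately have "reach (sum_list (replicate k (2::nat))) (replicate k 2)" unfolding reach_def by simp
    moreover have "mset (replicate k (2::nat)) = mset M" using mM True by simp
    ultimately show ?thesis by blast
  next
    case False
    show ?thesis
    proof (cases "\<exists>x\<in>set B. 5 \<le> x")
      case True
      then obtain x where x: "x \<in> set B" "5 \<le> x" by blast
      define B' where "B' = remove1 x B"
      have mB: "mset B = add_mset x (mset B')" unfolding B'_def using x(1) by simp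
      have B'3: "\<forall>y\<in>set B'. 3 \<le> y" using B3 unfolding B'_def by (meson notin_set_remove1)
      have "Preach (5 + (x - 5)) ([] @ [5 + (x - 5)])" by (rule P_grow) (use reach5 in simp)
      then have "Preach x [x]" using x(2) by simp
      then have "Preach (x + sum_list B') ([x] @ B')" by (rule P_adds[OF _ B'3])
      then have "reach (x + sum_list B' + 2 * k) (([x] @ B') @ replicate k 2)" by (rule twos_reach)
      moreover have "sum_list (([x] @ B') @ replicate k (2::nat)) = x + sum_list B' + 2 * k"
        by (simp add: sum_list_replicate)
      moreover have "mset (([x] @ B') @ replicate k (2::nat)) = mset M" using mM mB by simp
      ultimately show ?thesis by metis
    next
      case no5: False
      then have B34: "\<forall>y\<in>set B. y = 3 \<or> y = 4" using B3 by force
      obtain x B1' where Bx: "B = x # B1'" using False by (cases B) auto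
      have x34: "x = 3 \<or> x = 4" using B34 Bx by simp
      show ?thesis
      proof (cases B1')
        case Nil
        then have k1: "1 \<le> k" using sM s5 Bx x34 by auto
        have base: "Qreach (x + 2) [x, 2]" using x34 reachQ2 reachQ3 by auto
        have q: "Qreach (x + 2 + 2 * (k - 1)) ([x, 2] @ replicate (k - 1) 2)" by (rule Q_adds[OF base])
        have l: "[x, 2] @ replicate (k - 1) 2 = x # replicate k (2::nat)"
          using k1 by (cases k) auto
        have s: "x + 2 + 2 * (k - 1) = sum_list (x # replicate k (2::nat))"
          using k1 by (simp add: sum_list_replicate)
        have "reach (sum_list (x # replicate k (2::nat))) (x # replicate k 2)"
          unfolding reach_def using q by (simp only: l s) simp
        moreover have "mset (x # replicate k (2::nat)) = mset M" using mM Bx Nil by simp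
        ultimately show ?thesis by blast
      next
        case (Cons y B'')
        have y34: "y = 3 \<or> y = 4" using B34 Bx Cons by simp
        have B''3: "\<forall>z\<in>set B''. 3 \<le> z" using B3 Bx Cons by simp
        have base: "Preach (x + 3) ([x] @ [3])" using x34 reachP0 reachP1 by auto
        have "Preach (x + 3 + (y - 3)) ([x] @ [3 + (y - 3)])" by (rule P_grow[OF base])
        then have "Preach (x + y) [x, y]" using y34 by (auto simp: add.commute)
        then have "Preach (x + y + sum_list B'') ([x, y] @ B'')" by (rule P_adds[OF _ B''3])
        then have "reach (x + y + sum_list B'' + 2 * k) (([x, y] @ B'') @ replicate k 2)" by (rule twos_reach)
        moreover have "sum_list (([x, y] @ B'') @ replicate k (2::nat)) = x + y + sum_list B'' + 2 * k"
          by (simp add: sum_list_replicate)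
        moreover have "mset (([x, y] @ B'') @ replicate k (2::nat)) = mset M" using mM Bx Cons by simp
        ultimately show ?thesis by metis
      qed
    qed
  qed
qed

theorem mainTheorem14:
  fixes n :: nat and M :: "nat list"
  assumes "n \<ge> 5"
    and "\<forall>m \<in> set M. 2 \<le> m \<and> m \<le> n"
    and "sum_list M = n"
  shows "has_cycle_decomp (M @ [n, n, n]) (mult_graph 2 (circulant {1, 2} n))"
proof -
  have M2: "\<forall>x\<in>set M. 2 \<le> x" using assms(2) by blast
  obtain L where L: "mset L = mset M" "reach (sum_list L) L"
    using exists_L[OF M2] assms(1,3) by auto
  have "sum_list L = n"
    using L(1) assms(3) by (metis sum_mset_sum_list)
  then have "reach n L" using L(2) by simp
  then have "has_cycle_decomp (L @ [n, n, n]) (mult_graph 2 (circulant {1, 2} n))"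
    unfolding reach_def using Pfinal Qfinal by blast
  moreover have "mset (L @ [n, n, n]) = mset (M @ [n, n, n])" using L(1) by simp
  ultimately show ?thesis by (rule decomp_perm)
qed

end
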